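(* Consider the multicast coalitional game with player set $\mathcal{N}=\{1,\ldots,N\}$ and value function $$v(S)=\sum_{i\in S}U_i-\sum_{i\in S}\frac{\alpha_i}{R_S}-\frac{\beta+\gamma}{R_S},\qquad R_S=\min_{i\in S}R_i,$$ for nonempty $S\subseteq\mathcal{N}$. Suppose $R_i=R_0$ and $P_{Rx,i}=P_{Rx}$ for all $i\in\mathcal{N}$, so that $\alpha_i=\alpha:=aP_{Rx}X$ for all $i$. Let $$x_i=U_i-\frac{\alpha}{R_0}-\frac{\beta+\gamma}{NR_0},\qquad i\in\mathcal{N}.$$ Then the payoff profile $(x_1,\dots,x_N)$ lies in the core.
   Context: A transmitter multicasts a file of size $X>0$ bits to users $\mathcal{N}=\{1,\dots,N\}$. User $i$ has valuation $U_i\in\mathbb{R}$, downloads at rate $R_i>0$, and consumes receive power $P_{Rx,i}>0$; the transmitter transmits at power $P_{Tx}>0$. Costs per unit energy are $a>0$ at users and $b>0$ at the transmitter; bandwidth cost per second is $w>0$. Set $\alpha_i=aP_{Rx,i}X$, $\beta=bP_{Tx}X$, $\gamma=wX$. The core is the set of payoff vectors $(x_1,\dots,x_N)\in\mathbb{R}^N$ with $\sum_{i\in\mathcal{N}}x_i=v(\mathcal{N})$ and $\sum_{i\in S}x_i\ge v(S)$ for every nonempty $S\subseteq\mathcal{N}$. *)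

theory Defs
  imports Complex_Main
begin

definition R_S :: "(nat \<Rightarrow> real) \<Rightarrow> nat set \<Rightarrow> real" where
  "R_S R S = Min (R ` S)"

text \<open>Value of coalition S (for nonempty S):
  v(S) = sum U_i - sum alpha_i / R_S - (beta + gamma) / R_S.
  The empty coalition is not used by the core conditions; we set v({}) = 0.\<close>
definition mc_value ::
  "(nat \<Rightarrow> real) \<Rightarrow> (nat \<Rightarrow> real) \<Rightarrow> (nat \<Rightarrow> real) \<Rightarrow> real \<Rightarrow> real \<Rightarrow> nat set \<Rightarrow> real" where
  "mc_value U alpha R beta gamma S =
     (if S = {} then 0 else
      (\<Sum>i\<in>S. U i) - (\<Sum>i\<in>S. alpha i / R_S R S) - (beta + gamma) / R_S R S)"

definition in_core :: "nat set \<Rightarrow> (nat set \<Rightarrow> real) \<Rightarrow> (nat \<Rightarrow> real) \<Rightarrow> bool" where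
  "in_core Np v x \<longleftrightarrow>
     (\<Sum>i\<in>Np. x i) = v Np \<and>
     (\<forall>S. S \<subseteq> Np \<and> S \<noteq> {} \<longrightarrow> (\<Sum>i\<in>S. x i) \<ge> v S)"

end

theory Submission
  imports Defs
begin

theorem proposition1:
  fixes N :: nat and U R P_Rx :: "nat \<Rightarrow> real"
    and R0 P_Rx0 P_Tx X a b w :: real
  assumes N_pos: "N \<ge> 1"
    and X_pos: "X > 0" and a_pos: "a > 0" and b_pos: "b > 0" and w_pos: "w > 0"
    and PTx_pos: "P_Tx > 0"
    and R_pos: "\<forall>i\<in>{1..N}. R i > 0"
    and PRx_pos: "\<forall>i\<in>{1..N}. P_Rx i > 0"
    and R_const: "\<forall>i\<in>{1..N}. R i = R0"
    and PRx_const: "\<forall>i\<in>{1..N}. P_Rx i = P_Rx0"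
  shows "in_core {1..N}
           (mc_value U (\<lambda>i. a * P_Rx i * X) R (b * P_Tx * X) (w * X))
           (\<lambda>i. U i - (a * P_Rx0 * X) / R0 - (b * P_Tx * X + w * X) / (real N * R0))"
proof -
  have R0pos: "R0 > 0" using R_pos R_const N_pos by force
  define B where "B = b * P_Tx * X + w * X"
  have Bpos: "B > 0" unfolding B_def using b_pos PTx_pos X_pos w_pos by (simp add: add_pos_pos)
  have Npos: "real N > 0" using N_pos by simp
  have key: "(\<Sum>i\<in>S. U i - (a * P_Rx0 * X) / R0 - B / (real N * R0))
     = (\<Sum>i\<in>S. U i) - (\<Sum>i\<in>S. a * P_Rx i * X / R_S R S) - real (card S) * B / (real N * R0)"
    and RS: "R_S R S = R0"
    if S: "S \<subseteq> {1..N}" "S \<noteq> {}" for S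
  proof -
    have "R ` S = {R0}" using S R_const by auto
    then show RS: "R_S R S = R0" unfolding R_S_def by simp
    have "(\<Sum>i\<in>S. a * P_Rx i * X / R_S R S) = (\<Sum>i\<in>S. a * P_Rx0 * X / R0)"
      using S PRx_const RS by (intro sum.cong) auto
    then show "(\<Sum>i\<in>S. U i - (a * P_Rx0 * X) / R0 - B / (real N * R0))
     = (\<Sum>i\<in>S. U i) - (\<Sum>i\<in>S. a * P_Rx i * X / R_S R S) - real (card S) * B / (real N * R0)"
      by (simp add: sum_subtractf)
  qed
  show ?thesis
    unfolding in_core_def mc_value_def B_def[symmetric]
  proof (intro conjI allI impI)
    have ne: "{1..N} \<noteq> {}" using N_pos by simp
    show "(\<Sum>i\<in>{1..N}. U i - a * P_Rx0 * X / R0 - B / (real N * R0)) =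
      (if {1..N} = {} then 0 else (\<Sum>i\<in>{1..N}. U i) - (\<Sum>i\<in>{1..N}. a * P_Rx i * X / R_S R {1..N}) - B / R_S R {1..N})"
      using key[OF subset_refl ne] RS[OF subset_refl ne] ne Npos R0pos by simp
  next
    fix S assume S: "S \<subseteq> {1..N} \<and> S \<noteq> {}"
    have cS: "real (card S) \<le> real N"
      using card_mono[OF _ S[THEN conjunct1]] by simp
    have "real (card S) * B / (real N * R0) \<le> real N * B / (real N * R0)"
      using cS Bpos Npos R0pos by (intro divide_right_mono mult_right_mono) auto
    also have "\<dots> = B / R0" using Npos by simp
    finally have le: "real (card S) * B / (real N * R0) \<le> B / R0" .
    show "(if S = {} then 0 else (\<Sum>i\<in>S. U i) - (\<Sum>i\<in>S. a * P_Rx i * X / R_S R S) - B / R_S R S)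
      \<le> (\<Sum>i\<in>S. U i - a * P_Rx0 * X / R0 - B / (real N * R0))"
      using key[of S] RS[of S] S le by simp
  qed
qed

end
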